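(* Let $(A,\mathfrak{m})$ be a Cohen–Macaulay local ring of dimension $d>0$ with infinite residue field. Let $M$ be a Cohen–Macaulay $A$-module of dimension $1$ with a presentation $G\xrightarrow{\phi}F\to M\to0$ ($F,G$ finite free) such that all entries of $\phi$ lie in $\mathfrak{m}^l$. Suppose $\operatorname{depth}G(A)\ge1$ and $x$ is an $A\oplus M$-superficial element. Then: 1. $(\mathfrak{m}^{i+1}M:_Mx)=\mathfrak{m}^iM$ for $i=0,\dots,l-1$. 2. If moreover $\mathfrak{m}^lM\subseteq xM$, then $\operatorname{depth}G(M)\ge1$.
   Context: $x\in\mathfrak{m}$ is superficial for a module $N$ if there is $c>0$ with $(\mathfrak{m}^nN:_Nx)\cap\mathfrak{m}^cN=\mathfrak{m}^{n-1}N$ for all $n>c$. $G(M)=\bigoplus_n\mathfrak{m}^nM/\mathfrak{m}^{n+1}M$, $G(A)=\bigoplus_n\mathfrak{m}^n/\mathfrak{m}^{n+1}$, depth with respect to the irrelevant maximal ideal of $G(A)$. *)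

theory Defs
  imports Main "HOL-Library.Product_Plus" "HOL-Library.Extended_Nat"
begin

text \<open>Commutative algebra over a type-class ring 'a :: comm_ring_1.
  A module over 'a is a type 'b :: ab_group_add with a scalar action
  scale satisfying the HOL locale module scale.\<close>

definition is_ideal :: "'a::comm_ring_1 set \<Rightarrow> bool" where
  "is_ideal I \<longleftrightarrow> 0 \<in> I \<and> (\<forall>a\<in>I. \<forall>b\<in>I. a + b \<in> I) \<and> (\<forall>r. \<forall>a\<in>I. r * a \<in> I)"

definition maximal_ideal :: "'a::comm_ring_1 set \<Rightarrow> bool" where
  "maximal_ideal I \<longleftrightarrow> is_ideal I \<and> I \<noteq> UNIV \<and>
     (\<forall>J. is_ideal J \<and> I \<subseteq> J \<and> J \<noteq> UNIV \<longrightarrow> J = I)"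

definition prime_ideal :: "'a::comm_ring_1 set \<Rightarrow> bool" where
  "prime_ideal P \<longleftrightarrow> is_ideal P \<and> P \<noteq> UNIV \<and> (\<forall>a b. a * b \<in> P \<longrightarrow> a \<in> P \<or> b \<in> P)"

definition set_smult :: "('a \<Rightarrow> 'b \<Rightarrow> 'b::ab_group_add) \<Rightarrow> 'a set \<Rightarrow> 'b set \<Rightarrow> 'b set" where
  "set_smult scale I N = {(\<Sum>i<(k::nat). scale (a i) (v i)) | k a v. \<forall>i<k. a i \<in> I \<and> v i \<in> N}"

definition ideal_gen :: "'a::comm_ring_1 set \<Rightarrow> 'a set" where
  "ideal_gen S = set_smult (*) UNIV S"

fun ideal_pow :: "'a::comm_ring_1 set \<Rightarrow> nat \<Rightarrow> 'a set" where
  "ideal_pow I 0 = UNIV"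
| "ideal_pow I (Suc n) = set_smult (*) I (ideal_pow I n)"

definition mpow_mod :: "('a::comm_ring_1 \<Rightarrow> 'b \<Rightarrow> 'b::ab_group_add) \<Rightarrow> 'a set \<Rightarrow> nat \<Rightarrow> 'b set" where
  "mpow_mod scale m n = set_smult scale (ideal_pow m n) UNIV"

definition mod_colon :: "('a \<Rightarrow> 'b \<Rightarrow> 'b) \<Rightarrow> 'b set \<Rightarrow> 'a \<Rightarrow> 'b set" where
  "mod_colon scale N x = {v. scale x v \<in> N}"

definition noetherian_ring :: "'a::comm_ring_1 itself \<Rightarrow> bool" where
  "noetherian_ring _ \<longleftrightarrow> (\<forall>I::'a set. is_ideal I \<longrightarrow> (\<exists>S. finite S \<and> I = ideal_gen S))"

definition noetherian_local :: "'a::comm_ring_1 set \<Rightarrow> bool" where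
  "noetherian_local m \<longleftrightarrow> noetherian_ring TYPE('a) \<and> maximal_ideal m \<and>
     (\<forall>J. maximal_ideal J \<longrightarrow> J = m)"

definition infinite_residue_field :: "'a::comm_ring_1 set \<Rightarrow> bool" where
  "infinite_residue_field m \<longleftrightarrow> infinite ((\<lambda>a. {b. a - b \<in> m}) ` UNIV)"

text \<open>Krull dimension of A/J: supremum of lengths of chains of primes containing J.\<close>
definition krull_dim :: "'a::comm_ring_1 set \<Rightarrow> enat" where
  "krull_dim J = Sup {enat n | n. \<exists>p. (\<forall>i\<le>n. prime_ideal (p i) \<and> J \<subseteq> p i) \<and>
                                     (\<forall>i<n. p i \<subset> p (Suc i))}"

definition annihilator :: "('a::comm_ring_1 \<Rightarrow> 'b \<Rightarrow> 'b::ab_group_add) \<Rightarrow> 'a set" where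
  "annihilator scale = {a. \<forall>v. scale a v = 0}"

definition module_dim :: "('a::comm_ring_1 \<Rightarrow> 'b \<Rightarrow> 'b::ab_group_add) \<Rightarrow> enat" where
  "module_dim scale = krull_dim (annihilator scale)"

definition regular_seq :: "('a::comm_ring_1 \<Rightarrow> 'b \<Rightarrow> 'b::ab_group_add) \<Rightarrow> 'a set \<Rightarrow> (nat \<Rightarrow> 'a) \<Rightarrow> nat \<Rightarrow> bool" where
  "regular_seq scale m xs n \<longleftrightarrow>
     (\<forall>i<n. xs i \<in> m) \<and>
     (\<forall>i<n. \<forall>v. scale (xs i) v \<in> set_smult scale (ideal_gen (xs ` {..<i})) UNIV
                 \<longrightarrow> v \<in> set_smult scale (ideal_gen (xs ` {..<i})) UNIV) \<and>
     set_smult scale (ideal_gen (xs ` {..<n})) UNIV \<noteq> UNIV"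

definition depth :: "('a::comm_ring_1 \<Rightarrow> 'b \<Rightarrow> 'b::ab_group_add) \<Rightarrow> 'a set \<Rightarrow> enat" where
  "depth scale m = Sup {enat n | n. \<exists>xs. regular_seq scale m xs n}"

definition cohen_macaulay :: "('a::comm_ring_1 \<Rightarrow> 'b \<Rightarrow> 'b::ab_group_add) \<Rightarrow> 'a set \<Rightarrow> bool" where
  "cohen_macaulay scale m \<longleftrightarrow> depth scale m = module_dim scale"

definition superficial :: "('a::comm_ring_1 \<Rightarrow> 'b \<Rightarrow> 'b::ab_group_add) \<Rightarrow> 'a set \<Rightarrow> 'a \<Rightarrow> bool" where
  "superficial scale m x \<longleftrightarrow> x \<in> m \<and> (\<exists>c>0. \<forall>n>c.
      mod_colon scale (mpow_mod scale m n) x \<inter> mpow_mod scale m c = mpow_mod scale m (n - 1))"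

definition sum_scale :: "('a::comm_ring_1 \<Rightarrow> 'b \<Rightarrow> 'b::ab_group_add) \<Rightarrow> 'a \<Rightarrow> 'a \<times> 'b \<Rightarrow> 'a \<times> 'b" where
  "sum_scale scale a p = (a * fst p, scale a (snd p))"

text \<open>M has a presentation G --phi--> F --> M --> 0 with F = A^n, G = A^k
  (phi an n x k matrix) and all entries of phi in m^l: generators g 0..g (n-1)
  of M, and the kernel of c \<mapsto> \<Sum> c_i g_i is exactly the image of phi.\<close>
definition has_presentation_in_pow :: "('a::comm_ring_1 \<Rightarrow> 'b \<Rightarrow> 'b::ab_group_add) \<Rightarrow> 'a set \<Rightarrow> nat \<Rightarrow> bool" where
  "has_presentation_in_pow scale m l \<longleftrightarrow> (\<exists>n k (g :: nat \<Rightarrow> 'b) (phi :: nat \<Rightarrow> nat \<Rightarrow> 'a).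
     (\<forall>v. \<exists>c. v = (\<Sum>i<n. scale (c i) (g i))) \<and>
     (\<forall>c. (\<Sum>i<n. scale (c i) (g i)) = 0 \<longleftrightarrow> (\<exists>b. \<forall>i<n. c i = (\<Sum>j<k. phi i j * b j))) \<and>
     (\<forall>i<n. \<forall>j<k. phi i j \<in> ideal_pow m l))"

text \<open>depth G(M) \<ge> 1 (depth w.r.t. the irrelevant maximal ideal G(A)_+ of G(A)):
  there is an element u of G(A)_+ which is a nonzerodivisor on G(M).
  Elements of G(A) = \<Oplus> m^n/m^(n+1) are represented by sequences u with
  u n \<in> m^n, almost all u n \<in> m^(n+1); u \<in> G(A)_+ iff its degree 0 component vanishes,
  i.e. u 0 \<in> m. Likewise elements of G(M) by sequences f with f n \<in> m^n M.
  The product u f has degree n component \<Sum>(i+j=n) u_i f_j mod m^(n+1) M.\<close>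
definition assoc_graded_depth_pos :: "('a::comm_ring_1 \<Rightarrow> 'b \<Rightarrow> 'b::ab_group_add) \<Rightarrow> 'a set \<Rightarrow> bool" where
  "assoc_graded_depth_pos scale m \<longleftrightarrow> (\<exists>u :: nat \<Rightarrow> 'a.
     (\<forall>n. u n \<in> ideal_pow m n) \<and> u 0 \<in> m \<and> (\<exists>N. \<forall>n\<ge>N. u n \<in> ideal_pow m (Suc n)) \<and>
     (\<forall>f :: nat \<Rightarrow> 'b.
        (\<forall>n. f n \<in> mpow_mod scale m n) \<and> (\<exists>N. \<forall>n\<ge>N. f n \<in> mpow_mod scale m (Suc n)) \<and>
        (\<forall>n. (\<Sum>i\<le>n. scale (u i) (f (n - i))) \<in> mpow_mod scale m (Suc n))
        \<longrightarrow> (\<forall>n. f n \<in> mpow_mod scale m (Suc n))))"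

end

theory Submission
  imports Defs
begin


lemma ss_0: "0 \<in> set_smult scale I N"
  unfolding set_smult_def by (rule CollectI, rule exI[of _ 0]) auto

lemma ss_1: "a \<in> I \<Longrightarrow> v \<in> N \<Longrightarrow> scale a v \<in> set_smult scale I N"
  unfolding set_smult_def
  by (rule CollectI, rule exI[of _ 1], rule exI[of _ "\<lambda>_. a"], rule exI[of _ "\<lambda>_. v"]) auto

lemma ss_snoc: assumes "p \<in> set_smult scale I N" "a \<in> I" "v \<in> N"
  shows "p + scale a v \<in> set_smult scale I N"
proof -
  from assms(1) obtain k b w where p: "p = (\<Sum>i<(k::nat). scale (b i) (w i))" and bw: "\<forall>i<k. b i \<in> I \<and> w i \<in> N"
    unfolding set_smult_def by blast
  have "p + scale a v = (\<Sum>i<Suc k. scale ((b(k:=a)) i) ((w(k:=v)) i))"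
    using p by simp
  moreover have "\<forall>i<Suc k. (b(k:=a)) i \<in> I \<and> (w(k:=v)) i \<in> N" using bw assms by (auto simp: less_Suc_eq)
  ultimately show ?thesis unfolding set_smult_def by blast
qed

lemma ss_induct[consumes 1, case_names zero one add]:
  assumes "w \<in> set_smult scale I N" "P 0" "\<And>a v. a \<in> I \<Longrightarrow> v \<in> N \<Longrightarrow> P (scale a v)"
    "\<And>p q. P p \<Longrightarrow> P q \<Longrightarrow> P (p + q)"
  shows "P w"
proof -
  from assms(1) obtain k b u where w: "w = (\<Sum>i<(k::nat). scale (b i) (u i))" and bu: "\<forall>i<k. b i \<in> I \<and> u i \<in> N"
    unfolding set_smult_def by blast
  have "\<forall>j\<le>k. P (\<Sum>i<j. scale (b i) (u i))"
  proof (intro allI impI)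
    fix j assume "j \<le> k" thus "P (\<Sum>i<j. scale (b i) (u i))"
      by (induction j) (auto simp: assms(2) bu intro!: assms(3,4))
  qed
  thus ?thesis using w by auto
qed

lemma ss_add: assumes "p \<in> set_smult scale I N" "q \<in> set_smult scale I N"
  shows "p + q \<in> set_smult scale I N"
proof -
  have "\<forall>p\<in>set_smult scale I N. p + q \<in> set_smult scale I N"
    using assms(2)
  proof (induction rule: ss_induct)
    case zero then show ?case by simp
  next
    case (one a v)
    show ?case
    proof
      fix p assume "p \<in> set_smult scale I N"
      thus "p + scale a v \<in> set_smult scale I N" by (rule ss_snoc) (fact one)+
    qed
  next
    case (add p1 q1)
    show ?case
    proof
      fix p assume "p \<in> set_smult scale I N"
      hence "p + p1 \<in> set_smult scale I N" by (rule bspec[OF add(1)])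
      hence "p + p1 + q1 \<in> set_smult scale I N" by (rule bspec[OF add(2)])
      thus "p + (p1 + q1) \<in> set_smult scale I N" by (simp add: add.assoc)
    qed
  qed
  thus ?thesis using assms(1) by (rule bspec)
qed


lemma ss_mono: assumes "I \<subseteq> J" shows "set_smult scale I N \<subseteq> set_smult scale J N"
proof
  fix w assume "w \<in> set_smult scale I N"
  then show "w \<in> set_smult scale J N"
  proof (induction rule: ss_induct)
    case zero then show ?case by (rule ss_0)
  next
    case (one a v) then show ?case using assms by (intro ss_1) auto
  next
    case (add p q) then show ?case by (rule ss_add)
  qed
qed

lemma ideal_ss: assumes "is_ideal I" shows "is_ideal (set_smult (*) I J)"
  unfolding is_ideal_def
proof (intro conjI ballI allI)
  show "0 \<in> set_smult (*) I J" by (rule ss_0)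
  fix a b assume "a \<in> set_smult (*) I J" "b \<in> set_smult (*) I J"
  thus "a + b \<in> set_smult (*) I J" by (rule ss_add)
next
  fix r a assume "a \<in> set_smult (*) I J"
  thus "r * a \<in> set_smult (*) I J"
  proof (induction rule: ss_induct)
    case zero then show ?case by (simp add: ss_0)
  next
    case (one a v)
    have "r * (a * v) = (r * a) * v" by (simp add: mult.assoc)
    moreover have "r * a \<in> I" using assms one unfolding is_ideal_def by blast
    have "(r * a) * v \<in> set_smult (*) I J" by (rule ss_1) fact+
    ultimately show ?case by (simp add: mult.assoc)
  next
    case (add p q)
    have "r * p + r * q \<in> set_smult (*) I J" by (rule ss_add) fact+
    then show ?case by (simp add: distrib_left)
  qed
qed

lemma ideal_UNIV: "is_ideal UNIV" unfolding is_ideal_def by auto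

lemma ideal_pow_ideal: "is_ideal m \<Longrightarrow> is_ideal (ideal_pow m n)"
  by (cases n) (auto simp: ideal_UNIV ideal_ss)

lemma ideal_mult_closed: "is_ideal I \<Longrightarrow> b \<in> I \<Longrightarrow> a * b \<in> I"
  unfolding is_ideal_def by blast

lemma ideal_mult_closed': "is_ideal I \<Longrightarrow> a \<in> I \<Longrightarrow> a * b \<in> I"
  unfolding is_ideal_def by (metis mult.commute)

lemma ideal_add_closed: "is_ideal I \<Longrightarrow> a \<in> I \<Longrightarrow> b \<in> I \<Longrightarrow> a + b \<in> I"
  unfolding is_ideal_def by blast

lemma ideal_zero: "is_ideal I \<Longrightarrow> 0 \<in> I"
  unfolding is_ideal_def by blast

lemma ideal_neg: "is_ideal I \<Longrightarrow> a \<in> I \<Longrightarrow> - a \<in> I"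
  using ideal_mult_closed[of I a "-1"] by simp

lemma ideal_diff: "is_ideal I \<Longrightarrow> a \<in> I \<Longrightarrow> b \<in> I \<Longrightarrow> a - b \<in> I"
  using ideal_add_closed[of I a "-b"] ideal_neg[of I b] by simp

lemma ideal_sum: assumes I: "is_ideal I" shows "(\<And>i. i \<in> A \<Longrightarrow> f i \<in> I) \<Longrightarrow> sum f A \<in> I"
proof (induction A rule: infinite_finite_induct)
  case (infinite A) then show ?case using ideal_zero[OF I] by simp
next
  case empty then show ?case using ideal_zero[OF I] by simp
next
  case (insert x F)
  have a: "f x \<in> I" by (rule insert.prems) simp
  have b: "sum f F \<in> I" by (rule insert.IH) (rule insert.prems, simp)
  have "f x + sum f F \<in> I" by (rule ideal_add_closed[OF I a b])
  then show ?case using insert(1,2) by simp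
qed

lemma ss_ideal_sub: "is_ideal J \<Longrightarrow> (\<And>a b. a \<in> I \<Longrightarrow> b \<in> N \<Longrightarrow> a * b \<in> J) \<Longrightarrow> set_smult (*) I N \<subseteq> J"
proof
  fix w assume J: "is_ideal J" and h: "\<And>a b. a \<in> I \<Longrightarrow> b \<in> N \<Longrightarrow> a * b \<in> J" and "w \<in> set_smult (*) I N"
  from this(3) show "w \<in> J"
    proof (induction rule: ss_induct)
    case zero then show ?case by (rule ideal_zero[OF J])
  next
    case (one a v) then show ?case by (rule h)
  next
    case (add p q) then show ?case by (rule ideal_add_closed[OF J])
  qed
qed

lemma ideal_pow_Suc_sub: "is_ideal m \<Longrightarrow> ideal_pow m (Suc n) \<subseteq> ideal_pow m n"
  by (simp, rule ss_ideal_sub[OF ideal_pow_ideal], assumption, rule ideal_mult_closed[OF ideal_pow_ideal])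

lemma ideal_pow_anti: "is_ideal m \<Longrightarrow> a \<le> b \<Longrightarrow> ideal_pow m b \<subseteq> ideal_pow m a"
proof (induction b)
  case 0 then show ?case by simp
next
  case (Suc b)
  show ?case
  proof (cases "a \<le> b")
    case True
    then show ?thesis using Suc.IH[OF Suc.prems(1) True] ideal_pow_Suc_sub[OF Suc.prems(1), of b] by (rule_tac subset_trans) 
  next
    case False
    then have "a = Suc b" using Suc.prems(2) by simp
    then show ?thesis by simp
  qed
qed

lemma ideal_pow_mult: assumes "is_ideal m" shows "a \<in> ideal_pow m p \<Longrightarrow> b \<in> ideal_pow m q \<Longrightarrow> a * b \<in> ideal_pow m (p + q)"
proof (induction p arbitrary: a)
  case 0
  have "a * b \<in> ideal_pow m q" by (rule ideal_mult_closed[OF ideal_pow_ideal[OF assms] 0(2)])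
  then show ?case by simp
next
  case (Suc p)
  from Suc.prems(1) have "a \<in> set_smult (*) m (ideal_pow m p)" by simp
  then have "a * b \<in> set_smult (*) m (ideal_pow m (p + q))"
  proof (induction rule: ss_induct)
    case zero then show ?case by (simp add: ss_0)
  next
    case (one c d)
    have "d * b \<in> ideal_pow m (p + q)" using Suc.IH[OF one(2) Suc.prems(2)] .
    have "c * (d * b) \<in> set_smult (*) m (ideal_pow m (p + q))" by (rule ss_1[OF one(1)]) fact
    then show ?case by (simp add: mult.assoc)
  next
    case (add p1 q1)
    have "p1 * b + q1 * b \<in> set_smult (*) m (ideal_pow m (p + q))" by (rule ss_add) fact+
    then show ?case by (simp only: distrib_right)
  qed
  then show ?case by simp
qed

lemma ss_ideal_UNIV: assumes m: "is_ideal I" shows "set_smult (*) I UNIV = I"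
proof
  show "set_smult (*) I UNIV \<subseteq> I" by (rule ss_ideal_sub[OF m], rule ideal_mult_closed'[OF m])
  show "I \<subseteq> set_smult (*) I UNIV"
  proof
    fix a assume "a \<in> I"
    hence "a * 1 \<in> set_smult (*) I UNIV" by (intro ss_1) simp_all
    thus "a \<in> set_smult (*) I UNIV" by simp
  qed
qed

lemma ideal_pow_1: "is_ideal m \<Longrightarrow> ideal_pow m 1 = m"
  by (simp add: ss_ideal_UNIV)

lemma mpow_mod_ring: "is_ideal m \<Longrightarrow> mpow_mod (*) m n = ideal_pow m n"
  unfolding mpow_mod_def by (simp add: ss_ideal_UNIV ideal_pow_ideal)

context module
begin

lemma mpow_scale: assumes "is_ideal m"
  shows "a \<in> ideal_pow m p \<Longrightarrow> v \<in> mpow_mod scale m q \<Longrightarrow> scale a v \<in> mpow_mod scale m (p + q)"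
  unfolding mpow_mod_def
proof -
  assume a: "a \<in> ideal_pow m p" and "v \<in> set_smult scale (ideal_pow m q) UNIV"
  from this(2) show "scale a v \<in> set_smult scale (ideal_pow m (p + q)) UNIV"
  proof (induction rule: ss_induct)
    case zero then show ?case by (simp add: ss_0)
  next
    case (one b w)
    have "(a * b) *s w \<in> set_smult scale (ideal_pow m (p + q)) UNIV"
      by (rule ss_1[OF ideal_pow_mult[OF assms a one(1)]]) simp
    then show ?case by simp
  next
    case (add p1 q1)
    have "a *s p1 + a *s q1 \<in> set_smult scale (ideal_pow m (p + q)) UNIV" by (rule ss_add) fact+
    then show ?case by (simp only: scale_right_distrib)
  qed
qed

lemma mpow_0: "0 \<in> mpow_mod scale m n" unfolding mpow_mod_def by (rule ss_0)
lemma mpow_add: "a \<in> mpow_mod scale m n \<Longrightarrow> b \<in> mpow_mod scale m n \<Longrightarrow> a + b \<in> mpow_mod scale m n"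
  unfolding mpow_mod_def by (rule ss_add)
lemma mpow_neg: assumes "is_ideal m" shows "a \<in> mpow_mod scale m n \<Longrightarrow> - a \<in> mpow_mod scale m n"
  using mpow_scale[OF assms, of "-1" 0 a n] by simp
lemma mpow_diff: assumes "is_ideal m" shows "a \<in> mpow_mod scale m n \<Longrightarrow> b \<in> mpow_mod scale m n \<Longrightarrow> a - b \<in> mpow_mod scale m n"
proof -
  assume "a \<in> mpow_mod scale m n" "b \<in> mpow_mod scale m n"
  hence "a + - b \<in> mpow_mod scale m n" by (intro mpow_add mpow_neg[OF assms])
  thus ?thesis by (simp only: diff_conv_add_uminus)
qed
lemma mpow_sum: "(\<And>i. i \<in> A \<Longrightarrow> f i \<in> mpow_mod scale m n) \<Longrightarrow> sum f A \<in> mpow_mod scale m n"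
proof (induction A rule: infinite_finite_induct)
  case (infinite A) then show ?case by (simp add: mpow_0)
next
  case empty then show ?case by (simp add: mpow_0)
next
  case (insert x F)
  have a: "f x \<in> mpow_mod scale m n" by (rule insert.prems) simp
  have b: "sum f F \<in> mpow_mod scale m n" by (rule insert.IH) (rule insert.prems, simp)
  have "f x + sum f F \<in> mpow_mod scale m n" by (rule mpow_add[OF a b])
  then show ?case using insert(1,2) by simp
qed
lemma mpow_anti: "is_ideal m \<Longrightarrow> a \<le> b \<Longrightarrow> mpow_mod scale m b \<subseteq> mpow_mod scale m a"
  unfolding mpow_mod_def by (rule ss_mono, rule ideal_pow_anti)

end


lemma ideal_pow_mult': "is_ideal m \<Longrightarrow> a \<in> ideal_pow m p \<Longrightarrow> b \<in> ideal_pow m q \<Longrightarrow> p + q = r \<Longrightarrow> a * b \<in> ideal_pow m r"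
  using ideal_pow_mult by blast

lemma xstar_nzd:
  fixes u :: "nat \<Rightarrow> 'a::comm_ring_1"
  assumes m: "is_ideal m"
  and u_mem: "\<forall>n. u n \<in> ideal_pow m n" and u0: "u 0 \<in> m" and uN: "\<forall>n\<ge>Nu. u n \<in> ideal_pow m (Suc n)"
  and nz: "\<forall>f. (\<forall>n. f n \<in> ideal_pow m n) \<and> (\<exists>N. \<forall>n\<ge>N. f n \<in> ideal_pow m (Suc n)) \<and>
              (\<forall>n. (\<Sum>i\<le>n. u i * f (n - i)) \<in> ideal_pow m (Suc n)) \<longrightarrow> (\<forall>n. f n \<in> ideal_pow m (Suc n))"
  and cc: "\<forall>n>c. {a. x * a \<in> ideal_pow m n} \<inter> ideal_pow m c = ideal_pow m (n - 1)"
  shows "\<forall>f. (\<forall>n. f n \<in> ideal_pow m n) \<and> (\<exists>N. \<forall>n\<ge>N. f n \<in> ideal_pow m (Suc n)) \<and>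
              (\<forall>n. x * f n \<in> ideal_pow m (Suc (Suc n))) \<longrightarrow> (\<forall>n. f n \<in> ideal_pow m (Suc n))"
proof -
  define I where "I = ideal_pow m"
  have Iid: "\<And>n. is_ideal (I n)" unfolding I_def using ideal_pow_ideal[OF m] .
  have Imul: "\<And>a b p q r. a \<in> I p \<Longrightarrow> b \<in> I q \<Longrightarrow> p + q = r \<Longrightarrow> a * b \<in> I r"
    unfolding I_def using ideal_pow_mult'[OF m] .
  have Ianti: "\<And>a b. a \<le> b \<Longrightarrow> I b \<subseteq> I a" unfolding I_def using ideal_pow_anti[OF m] .
  have I1: "I 1 = m" unfolding I_def using ideal_pow_1[OF m] .
  define Q where "Q k = (\<forall>f. (\<forall>n. f n \<in> I n) \<and> (\<exists>N. \<forall>n\<ge>N. f n \<in> I (Suc n)) \<and> (\<forall>n<k. f n \<in> I (Suc n)) \<and>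
              (\<forall>n. x * f n \<in> I (Suc (Suc n))) \<longrightarrow> (\<forall>n. f n \<in> I (Suc n)))" for k
  have Qc: "Q c"
    unfolding Q_def
  proof (intro allI impI)
    fix f n assume H: "(\<forall>n. f n \<in> I n) \<and> (\<exists>N. \<forall>n\<ge>N. f n \<in> I (Suc n)) \<and> (\<forall>n<c. f n \<in> I (Suc n)) \<and>
              (\<forall>n. x * f n \<in> I (Suc (Suc n)))"
    show "f n \<in> I (Suc n)"
    proof (cases "n < c")
      case True then show ?thesis using H by simp
    next
      case False
      have "f n \<in> I c" using H Ianti[of c n] False by auto
      moreover have "x * f n \<in> I (Suc (Suc n))" using H by simp
      ultimately have "f n \<in> {a. x * a \<in> I (Suc (Suc n))} \<inter> I c" by simp
      also have "\<dots> = I (Suc (Suc n) - 1)" unfolding I_def by (rule cc[rule_format]) (use False in simp)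
      finally show ?thesis by (simp del: ideal_pow.simps)
    qed
  qed
  have Qstep: "Q k" if "k < c" "Q (Suc k)" for k
    unfolding Q_def
  proof (rule allI, rule impI)
    fix f assume H: "(\<forall>n. f n \<in> I n) \<and> (\<exists>N. \<forall>n\<ge>N. f n \<in> I (Suc n)) \<and> (\<forall>n<k. f n \<in> I (Suc n)) \<and>
              (\<forall>n. x * f n \<in> I (Suc (Suc n)))"
    from H have f1: "\<And>n. f n \<in> I n" and f3: "\<And>n. n < k \<Longrightarrow> f n \<in> I (Suc n)"
      and f4: "\<And>n. x * f n \<in> I (Suc (Suc n))" by auto
    from H obtain N where f2: "\<And>n. n \<ge> N \<Longrightarrow> f n \<in> I (Suc n)" by auto
    define g where "g n = (\<Sum>i\<le>n. u i * f (n - i))" for n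
    have um: "\<And>i. u i \<in> I i" using u_mem unfolding I_def by simp
    have g1: "g n \<in> I n" for n
      unfolding g_def by (rule ideal_sum[OF Iid]) (rule Imul[OF um f1], simp)
    have g2: "g n \<in> I (Suc n)" if "n \<ge> Nu + N" for n
      unfolding g_def
    proof (rule ideal_sum[OF Iid])
      fix i assume i: "i \<in> {..n}"
      show "u i * f (n - i) \<in> I (Suc n)"
      proof (cases "i \<ge> Nu")
        case True
        then have "u i \<in> I (Suc i)" using uN unfolding I_def by simp
        then show ?thesis by (rule Imul[OF _ f1]) (use i in simp)
      next
        case False
        then have "f (n - i) \<in> I (Suc (n - i))" using that by (intro f2) simp
        then show ?thesis by (rule Imul[OF um]) (use i in simp)
      qed
    qed
    have g3: "g n \<in> I (Suc n)" if "n < Suc k" for n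
      unfolding g_def
    proof (rule ideal_sum[OF Iid])
      fix i assume i: "i \<in> {..n}"
      show "u i * f (n - i) \<in> I (Suc n)"
      proof (cases "i = 0")
        case True
        then have "u i \<in> I 1" using u0 I1 by simp
        then show ?thesis by (rule Imul[OF _ f1]) (use True in simp)
      next
        case False
        then have "f (n - i) \<in> I (Suc (n - i))" using that i by (intro f3) simp
        then show ?thesis by (rule Imul[OF um]) (use i False in simp)
      qed
    qed
    have g4: "x * g n \<in> I (Suc (Suc n))" for n
    proof -
      have "x * g n = (\<Sum>i\<le>n. u i * (x * f (n - i)))"
        unfolding g_def by (simp add: sum_distrib_left mult.left_commute)
      also have "\<dots> \<in> I (Suc (Suc n))"
      proof (rule ideal_sum[OF Iid])
        fix i assume i: "i \<in> {..n}"
        show "u i * (x * f (n - i)) \<in> I (Suc (Suc n))"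
          by (rule Imul[OF um f4]) (use i in simp)
      qed
      finally show ?thesis .
    qed
    have "\<forall>n. g n \<in> I (Suc n)"
      using \<open>Q (Suc k)\<close> unfolding Q_def
      using g1 g2 g3 g4 by blast
    then have "\<forall>n. (\<Sum>i\<le>n. u i * f (n - i)) \<in> ideal_pow m (Suc n)" unfolding g_def I_def .
    moreover have "\<forall>n. f n \<in> ideal_pow m n" using f1 unfolding I_def by simp
    moreover have "\<exists>N. \<forall>n\<ge>N. f n \<in> ideal_pow m (Suc n)" using f2 unfolding I_def by blast
    ultimately show "\<forall>n. f n \<in> I (Suc n)" using nz unfolding I_def by blast
  qed
  have "Q 0"
  proof (cases "c = 0")
    case True then show ?thesis using Qc by simp
  next
    case False
    have "0 \<le> c" by simp
    then show ?thesis
    proof (induction rule: inc_induct)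
      case base then show ?case by (rule Qc)
    next
      case (step n) then show ?case using Qstep by blast
    qed
  qed
  then show ?thesis unfolding Q_def I_def by simp
qed


lemma ideal_gen_self: "s \<in> S \<Longrightarrow> s \<in> ideal_gen S"
  unfolding ideal_gen_def using ss_1[of 1 UNIV s S "(*)"] by simp

lemma ideal_gen_sub: assumes "is_ideal J" "S \<subseteq> J" shows "ideal_gen S \<subseteq> J"
  unfolding ideal_gen_def
proof (rule ss_ideal_sub[OF assms(1)])
  fix a b assume "a \<in> (UNIV::'a set)" "b \<in> S"
  then show "a * b \<in> J" using assms by (intro ideal_mult_closed) auto
qed

lemma acc_ideal:
  fixes I :: "nat \<Rightarrow> 'a::comm_ring_1 set"
  assumes noeth: "noetherian_ring TYPE('a)" and ch: "\<And>j. I j \<subseteq> I (Suc j)" and id: "\<And>j. is_ideal (I j)"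
  shows "\<exists>J. \<forall>j\<ge>J. I j = I J"
proof -
  have mono: "\<And>a b. a \<le> b \<Longrightarrow> I a \<subseteq> I b" by (rule lift_Suc_mono_le[of I]) (rule ch)
  define U where "U = (\<Union>j. I j)"
  have "is_ideal U"
    unfolding is_ideal_def
  proof (intro conjI ballI allI)
    show "0 \<in> U" unfolding U_def using ideal_zero[OF id[of 0]] by blast
  next
    fix a b assume "a \<in> U" "b \<in> U"
    then obtain i j where a: "a \<in> I i" and b: "b \<in> I j" unfolding U_def by blast
    have "a \<in> I (max i j)" "b \<in> I (max i j)" using a b mono[of i "max i j"] mono[of j "max i j"] by auto
    hence "a + b \<in> I (max i j)" by (rule ideal_add_closed[OF id])
    thus "a + b \<in> U" unfolding U_def by blast
  next
    fix r a assume "a \<in> U"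
    then obtain i where a: "a \<in> I i" unfolding U_def by blast
    hence "r * a \<in> I i" by (rule ideal_mult_closed[OF id])
    thus "r * a \<in> U" unfolding U_def by blast
  qed
  then obtain F where F: "finite F" "U = ideal_gen F" using noeth unfolding noetherian_ring_def by blast
  have FU: "F \<subseteq> U" using F(2) ideal_gen_self by blast
  have "\<exists>J. F \<subseteq> I J" using F(1) FU
  proof (induction F rule: finite_induct)
    case empty then show ?case by simp
  next
    case (insert a F)
    then obtain J where J: "F \<subseteq> I J" by blast
    from insert(4) obtain i where "a \<in> I i" unfolding U_def by blast
    then show ?case using J mono[of i "max i J"] mono[of J "max i J"] by (intro exI[of _ "max i J"]) auto
  qed
  then obtain J where J: "F \<subseteq> I J" by blast
  have "U \<subseteq> I J" unfolding F(2) by (rule ideal_gen_sub[OF id J])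
  show ?thesis
  proof (intro exI allI impI)
    fix j assume "j \<ge> J"
    then show "I j = I J" using mono[of J j] \<open>U \<subseteq> I J\<close> unfolding U_def by blast
  qed
qed

definition submod :: "(nat \<Rightarrow> 'a::comm_ring_1) set \<Rightarrow> bool" where
  "submod S \<longleftrightarrow> (\<lambda>_. 0) \<in> S \<and> (\<forall>c\<in>S. \<forall>d\<in>S. (\<lambda>i. c i + d i) \<in> S) \<and> (\<forall>r. \<forall>c\<in>S. (\<lambda>i. r * c i) \<in> S)"

lemma submod_add: "submod S \<Longrightarrow> c \<in> S \<Longrightarrow> d \<in> S \<Longrightarrow> (\<lambda>i. c i + d i) \<in> S"
  unfolding submod_def by blast
lemma submod_smult: "submod S \<Longrightarrow> c \<in> S \<Longrightarrow> (\<lambda>i. r * c i) \<in> S"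
  unfolding submod_def by blast
lemma submod_diff: assumes "submod S" "c \<in> S" "d \<in> S" shows "(\<lambda>i. c i - d i) \<in> S"
proof -
  have "(\<lambda>i. (-1) * d i) \<in> S" by (rule submod_smult[OF assms(1,3)])
  hence "(\<lambda>i. c i + (\<lambda>i. (-1) * d i) i) \<in> S" by (rule submod_add[OF assms(1,2)])
  thus ?thesis by simp
qed

lemma acc_vec:
  fixes S :: "nat \<Rightarrow> (nat \<Rightarrow> 'a::comm_ring_1) set"
  assumes noeth: "noetherian_ring TYPE('a)"
  shows "(\<And>j. S j \<subseteq> S (Suc j)) \<Longrightarrow> (\<And>j. submod (S j)) \<Longrightarrow> (\<And>j c i. c \<in> S j \<Longrightarrow> i \<ge> n \<Longrightarrow> c i = 0)
    \<Longrightarrow> \<exists>J. \<forall>j\<ge>J. S j = S J"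
proof (induction n arbitrary: S)
  case 0
  have "S j = {\<lambda>_. 0}" for j
  proof
    show "S j \<subseteq> {\<lambda>_. 0}" using "0.prems"(3)[of _ j] by fastforce
    show "{\<lambda>_. 0} \<subseteq> S j" using "0.prems"(2)[of j] unfolding submod_def by simp
  qed
  then show ?case by simp
next
  case (Suc n)
  have mono: "\<And>a b. a \<le> b \<Longrightarrow> S a \<subseteq> S b" by (rule lift_Suc_mono_le[of S]) (rule Suc.prems(1))
  define P where "P j = (\<lambda>c. c n) ` S j" for j
  define R where "R j = {c \<in> S j. c n = 0}" for j
  have Pid: "is_ideal (P j)" for j
    unfolding is_ideal_def P_def
  proof (intro conjI ballI allI)
    show "0 \<in> (\<lambda>c. c n) ` S j" using Suc.prems(2)[of j] unfolding submod_def by force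
  next
    fix a b assume "a \<in> (\<lambda>c. c n) ` S j" "b \<in> (\<lambda>c. c n) ` S j"
    then obtain c d where "c \<in> S j" "d \<in> S j" "a = c n" "b = d n" by blast
    moreover have "(\<lambda>i. c i + d i) \<in> S j" using Suc.prems(2)[of j] calculation unfolding submod_def by blast
    ultimately show "a + b \<in> (\<lambda>c. c n) ` S j" by (intro image_eqI[of _ _ "\<lambda>i. c i + d i"]) auto
  next
    fix r a assume "a \<in> (\<lambda>c. c n) ` S j"
    then obtain c where "c \<in> S j" "a = c n" by blast
    moreover have "(\<lambda>i. r * c i) \<in> S j" using Suc.prems(2)[of j] calculation unfolding submod_def by blast
    ultimately show "r * a \<in> (\<lambda>c. c n) ` S j" by (intro image_eqI[of _ _ "\<lambda>i. r * c i"]) auto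
  qed
  have "\<exists>J. \<forall>j\<ge>J. P j = P J"
    by (rule acc_ideal[OF noeth]) (use Suc.prems(1) Pid in \<open>auto simp: P_def\<close>)
  then obtain J1 where J1: "\<And>j. j \<ge> J1 \<Longrightarrow> P j = P J1" by blast
  have "\<exists>J. \<forall>j\<ge>J. R j = R J"
  proof (rule Suc.IH)
    show "R j \<subseteq> R (Suc j)" for j using Suc.prems(1)[of j] unfolding R_def by blast
    show "submod (R j)" for j using Suc.prems(2)[of j] unfolding submod_def R_def by auto
    show "c i = 0" if "c \<in> R j" "i \<ge> n" for c j i
      using that Suc.prems(3)[of c j i] unfolding R_def by (cases "i = n") auto
  qed
  then obtain J2 where J2: "\<And>j. j \<ge> J2 \<Longrightarrow> R j = R J2" by blast
  define J where "J = max J1 J2"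
  show ?case
  proof (intro exI allI impI)
    fix j assume j: "j \<ge> J"
    show "S j = S J"
    proof
      show "S J \<subseteq> S j" using mono j by blast
      show "S j \<subseteq> S J"
      proof
        fix c assume c: "c \<in> S j"
        have "c n \<in> P j" unfolding P_def using c by blast
        also have "P j = P J" using J1[of j] J1[of J] j unfolding J_def by simp
        finally have "c n \<in> (\<lambda>c. c n) ` S J" unfolding P_def .
        then obtain d where d': "c n = d n" "d \<in> S J" by (rule imageE)
        then have d: "d \<in> S J" "d n = c n" by simp_all
        have dj: "d \<in> S j" using d(1) mono[OF j] by blast
        have "(\<lambda>i. c i - d i) \<in> S j" by (rule submod_diff[OF Suc.prems(2) c dj])
        hence "(\<lambda>i. c i - d i) \<in> R j" unfolding R_def using d(2) by simp
        also have "R j = R J" using J2[of j] J2[of J] j unfolding J_def by simp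
        finally have e: "(\<lambda>i. c i - d i) \<in> S J" unfolding R_def by blast
        have "(\<lambda>i. (\<lambda>i. c i - d i) i + d i) \<in> S J" by (rule submod_add[OF Suc.prems(2) e d(1)])
        thus "c \<in> S J" by simp
      qed
    qed
  qed
qed


declare ideal_pow.simps(2)[simp del]

lemma colon_A:
  fixes u :: "nat \<Rightarrow> 'a::comm_ring_1"
  assumes m: "is_ideal m"
  and u_mem: "\<forall>n. u n \<in> ideal_pow m n" and u0: "u 0 \<in> m" and uN: "\<forall>n\<ge>Nu. u n \<in> ideal_pow m (Suc n)"
  and nz: "\<forall>f. (\<forall>n. f n \<in> ideal_pow m n) \<and> (\<exists>N. \<forall>n\<ge>N. f n \<in> ideal_pow m (Suc n)) \<and>
              (\<forall>n. (\<Sum>i\<le>n. u i * f (n - i)) \<in> ideal_pow m (Suc n)) \<longrightarrow> (\<forall>n. f n \<in> ideal_pow m (Suc n))"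
  and cc: "\<forall>n>c. {a. x * a \<in> ideal_pow m n} \<inter> ideal_pow m c = ideal_pow m (n - 1)"
  shows "x * a \<in> ideal_pow m (Suc n) \<Longrightarrow> a \<in> ideal_pow m n"
proof (induction n arbitrary: a)
  case 0 then show ?case by simp
next
  case (Suc n)
  have X: "\<forall>f. (\<forall>n. f n \<in> ideal_pow m n) \<and> (\<exists>N. \<forall>n\<ge>N. f n \<in> ideal_pow m (Suc n)) \<and>
              (\<forall>n. x * f n \<in> ideal_pow m (Suc (Suc n))) \<longrightarrow> (\<forall>n. f n \<in> ideal_pow m (Suc n))"
    by (rule xstar_nzd[OF m u_mem u0 uN nz cc])
  have "x * a \<in> ideal_pow m (Suc n)" using Suc.prems ideal_pow_Suc_sub[OF m, of "Suc n"] by blast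
  hence an: "a \<in> ideal_pow m n" by (rule Suc.IH)
  define f where "f j = (if j = n then a else 0)" for j
  have z: "\<And>j. 0 \<in> ideal_pow m j" using ideal_zero[OF ideal_pow_ideal[OF m]] .
  have "\<forall>j. f j \<in> ideal_pow m j" unfolding f_def using an z by simp
  moreover have "\<exists>N. \<forall>j\<ge>N. f j \<in> ideal_pow m (Suc j)"
  proof (intro exI[of _ "Suc n"] allI impI)
    fix j assume "j \<ge> Suc n"
    then show "f j \<in> ideal_pow m (Suc j)" using z[of "Suc j"] by (simp add: f_def del: ideal_pow.simps)
  qed
  moreover have "\<forall>j. x * f j \<in> ideal_pow m (Suc (Suc j))"
    unfolding f_def using Suc.prems z by simp
  ultimately have "\<forall>j. f j \<in> ideal_pow m (Suc j)" using X by blast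
  then have "f n \<in> ideal_pow m (Suc n)" by (rule spec)
  then show ?case unfolding f_def by simp
qed

lemma mpow_sum_scale:
  assumes md: "module scale" and m: "is_ideal m"
  shows "mpow_mod (sum_scale scale) m n = ideal_pow m n \<times> mpow_mod scale m n"
proof
  show "mpow_mod (sum_scale scale) m n \<subseteq> ideal_pow m n \<times> mpow_mod scale m n"
  proof
    fix w assume "w \<in> mpow_mod (sum_scale scale) m n"
    then have "w \<in> set_smult (sum_scale scale) (ideal_pow m n) UNIV" unfolding mpow_mod_def .
    then show "w \<in> ideal_pow m n \<times> mpow_mod scale m n"
    proof (induction rule: ss_induct)
      case zero then show ?case using ideal_zero[OF ideal_pow_ideal[OF m]] module.mpow_0[OF md]
        by (simp add: zero_prod_def)
    next
      case (one a v)
      have "a * fst v \<in> ideal_pow m n" by (rule ideal_mult_closed'[OF ideal_pow_ideal[OF m] one(1)])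
      moreover have "scale a (snd v) \<in> mpow_mod scale m n" unfolding mpow_mod_def by (rule ss_1[OF one(1)]) simp
      ultimately show ?case unfolding sum_scale_def by simp
    next
      case (add p q)
      have "fst p + fst q \<in> ideal_pow m n" using add by (intro ideal_add_closed[OF ideal_pow_ideal[OF m]]) auto
      moreover have "snd p + snd q \<in> mpow_mod scale m n" using add by (intro module.mpow_add[OF md]) auto
      ultimately show ?case by (simp add: mem_Times_iff)
    qed
  qed
  show "ideal_pow m n \<times> mpow_mod scale m n \<subseteq> mpow_mod (sum_scale scale) m n"
  proof
    fix w assume w: "w \<in> ideal_pow m n \<times> mpow_mod scale m n"
    obtain a v where av: "w = (a, v)" by (cases w)
    have a: "a \<in> ideal_pow m n" and v: "v \<in> set_smult scale (ideal_pow m n) UNIV"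
      using w av unfolding mpow_mod_def by auto
    have 1: "(a, 0) \<in> set_smult (sum_scale scale) (ideal_pow m n) UNIV"
    proof -
      have "sum_scale scale a (1, 0) \<in> set_smult (sum_scale scale) (ideal_pow m n) UNIV" by (rule ss_1[OF a]) simp
      then show ?thesis unfolding sum_scale_def using module.scale_zero_right[OF md] by simp
    qed
    have 2: "(0, v) \<in> set_smult (sum_scale scale) (ideal_pow m n) UNIV"
      using v
    proof (induction rule: ss_induct)
      case zero then show ?case using ss_0[of "sum_scale scale" "ideal_pow m n" UNIV] by (simp add: zero_prod_def)
    next
      case (one b u)
      have "sum_scale scale b (0, u) \<in> set_smult (sum_scale scale) (ideal_pow m n) UNIV" by (rule ss_1[OF one(1)]) simp
      then show ?case unfolding sum_scale_def by simp
    next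
      case (add p q)
      have "(0, p) + (0, q) \<in> set_smult (sum_scale scale) (ideal_pow m n) UNIV" by (rule ss_add) fact+
      then show ?case by simp
    qed
    have "(a, 0) + (0, v) \<in> set_smult (sum_scale scale) (ideal_pow m n) UNIV" by (rule ss_add[OF 1 2])
    then show "w \<in> mpow_mod (sum_scale scale) m n" unfolding mpow_mod_def av by simp
  qed
qed

context module
begin

lemma mpow_0_UNIV: "mpow_mod scale m 0 = UNIV"
proof -
  have "v \<in> mpow_mod scale m 0" for v
  proof -
    have "scale 1 v \<in> set_smult scale (ideal_pow m 0) UNIV" by (rule ss_1) simp_all
    thus ?thesis unfolding mpow_mod_def by simp
  qed
  thus ?thesis by blast
qed

lemma mpow_Suc_sub: assumes m: "is_ideal m"
  shows "v \<in> mpow_mod scale m (Suc p) \<Longrightarrow> v \<in> set_smult scale m (mpow_mod scale m p)"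
proof -
  assume "v \<in> mpow_mod scale m (Suc p)"
  then have "v \<in> set_smult scale (ideal_pow m (Suc p)) UNIV" unfolding mpow_mod_def .
  then show ?thesis
  proof (induction rule: ss_induct)
    case zero then show ?case by (rule ss_0)
  next
    case (one a w)
    from one(1) have "a \<in> set_smult (*) m (ideal_pow m p)" by (simp add: ideal_pow.simps)
    then show ?case
    proof (induction rule: ss_induct)
      case zero then show ?case by (simp add: ss_0)
    next
      case (one c d)
      have "d *s w \<in> mpow_mod scale m p" unfolding mpow_mod_def by (rule ss_1[OF one(2)]) simp
      then have "c *s (d *s w) \<in> set_smult scale m (mpow_mod scale m p)" by (rule ss_1[OF one(1)])
      then show ?case by simp
    next
      case (add p1 q1)
      have "p1 *s w + q1 *s w \<in> set_smult scale m (mpow_mod scale m p)" by (rule ss_add) fact+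
      then show ?case by (simp only: scale_left_distrib)
    qed
  next
    case (add p q) then show ?case by (rule ss_add)
  qed
qed

lemma coef:
  assumes gen: "\<forall>v. \<exists>c. v = (\<Sum>i<n. c i *s g i)" and I: "is_ideal I"
  shows "w \<in> set_smult scale I UNIV \<Longrightarrow> \<exists>b. (\<forall>j<n. b j \<in> I) \<and> w = (\<Sum>j<n. b j *s g j)"
proof (induction rule: ss_induct)
  case zero
  show ?case by (rule exI[of _ "\<lambda>_. 0"]) (simp add: ideal_zero[OF I])
next
  case (one a v)
  obtain d where d: "v = (\<Sum>i<n. d i *s g i)" using gen by (rule allE) (erule exE)
  have "a *s v = (\<Sum>j<n. (a * d j) *s g j)" unfolding d by (simp add: scale_sum_right)
  moreover have "\<forall>j<n. a * d j \<in> I" using ideal_mult_closed'[OF I one(1)] by (intro allI impI)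
  ultimately show ?case by (intro exI[of _ "\<lambda>j. a * d j"] conjI)
next
  case (add p q)
  from add(1) obtain b1 where b1: "\<forall>j<n. b1 j \<in> I" "p = (\<Sum>j<n. b1 j *s g j)" by (elim exE conjE)
  from add(2) obtain b2 where b2: "\<forall>j<n. b2 j \<in> I" "q = (\<Sum>j<n. b2 j *s g j)" by (elim exE conjE)
  have "p + q = (\<Sum>j<n. (b1 j + b2 j) *s g j)" unfolding b1(2) b2(2) by (simp add: scale_left_distrib sum.distrib)
  moreover have "\<forall>j<n. b1 j + b2 j \<in> I" using b1(1) b2(1) ideal_add_closed[OF I] by (intro allI impI) auto
  ultimately show ?case by (intro exI[of _ "\<lambda>j. b1 j + b2 j"] conjI)
qed

end


declare ideal_pow.simps(2)[simp del]

context module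
begin

lemma part1:
  assumes m: "is_ideal m" and xm: "x \<in> m"
  and colA: "\<And>n a. x * a \<in> ideal_pow m (Suc n) \<Longrightarrow> a \<in> ideal_pow m n"
  and pres: "has_presentation_in_pow scale m l" and il: "i < l"
  shows "mod_colon scale (mpow_mod scale m (Suc i)) x = mpow_mod scale m i"
proof
  show "mpow_mod scale m i \<subseteq> mod_colon scale (mpow_mod scale m (Suc i)) x"
  proof
    fix v assume v: "v \<in> mpow_mod scale m i"
    have "x \<in> ideal_pow m 1" using ideal_pow_1[OF m] xm by simp
    then have "x *s v \<in> mpow_mod scale m (1 + i)" by (rule mpow_scale[OF m _ v])
    then show "v \<in> mod_colon scale (mpow_mod scale m (Suc i)) x" by (simp add: mod_colon_def)
  qed
  show "mod_colon scale (mpow_mod scale m (Suc i)) x \<subseteq> mpow_mod scale m i"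
  proof
    fix v assume "v \<in> mod_colon scale (mpow_mod scale m (Suc i)) x"
    hence xv: "x *s v \<in> mpow_mod scale m (Suc i)" by (simp add: mod_colon_def)
    from pres obtain n k :: nat and g phi where gen: "\<forall>v. \<exists>c. v = (\<Sum>i<n. c i *s g i)"
      and rel: "\<forall>c. (\<Sum>i<n. c i *s g i) = 0 \<longleftrightarrow> (\<exists>b. \<forall>i<n. c i = (\<Sum>j<k. phi i j * b j))"
      and ph: "\<forall>i<n. \<forall>j<k. phi i j \<in> ideal_pow m l"
      unfolding has_presentation_in_pow_def by blast
    obtain c where c: "v = (\<Sum>j<n. c j *s g j)" using gen by (rule allE) (erule exE)
    have "\<exists>b. (\<forall>j<n. b j \<in> ideal_pow m (Suc i)) \<and> x *s v = (\<Sum>j<n. b j *s g j)"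
      by (rule coef[OF gen ideal_pow_ideal[OF m]]) (use xv in \<open>simp add: mpow_mod_def\<close>)
    then obtain b where b: "\<forall>j<n. b j \<in> ideal_pow m (Suc i)" and xvb: "x *s v = (\<Sum>j<n. b j *s g j)"
      by (elim exE conjE)
    have xv2: "x *s v = (\<Sum>j<n. (x * c j) *s g j)" unfolding c scale_sum_right scale_scale ..
    have "(\<Sum>j<n. (x * c j - b j) *s g j) = (\<Sum>j<n. (x * c j) *s g j - b j *s g j)"
      unfolding scale_left_diff_distrib ..
    also have "\<dots> = (\<Sum>j<n. (x * c j) *s g j) - (\<Sum>j<n. b j *s g j)" by (rule sum_subtractf)
    also have "\<dots> = 0" unfolding xv2[symmetric] xvb[symmetric] by simp
    finally have "(\<Sum>j<n. (\<lambda>j. x * c j - b j) j *s g j) = 0" by simp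
    then have "\<exists>beta. \<forall>j<n. (\<lambda>j. x * c j - b j) j = (\<Sum>t<k. phi j t * beta t)"
      using rel by (rule_tac iffD1[OF spec[OF rel]])
    then obtain beta where beta: "\<forall>j<n. x * c j - b j = (\<Sum>t<k. phi j t * beta t)"
      by auto
    have cj: "c j \<in> ideal_pow m i" if j: "j < n" for j
    proof -
      have "(\<Sum>t<k. phi j t * beta t) \<in> ideal_pow m l"
        by (rule ideal_sum[OF ideal_pow_ideal[OF m]]) (rule ideal_mult_closed'[OF ideal_pow_ideal[OF m]], use ph j in simp)
      then have "x * c j - b j \<in> ideal_pow m l" using beta j by simp
      moreover have "ideal_pow m l \<subseteq> ideal_pow m (Suc i)" using il by (intro ideal_pow_anti[OF m]) simp
      ultimately have d: "x * c j - b j \<in> ideal_pow m (Suc i)" by (rule subsetD[rotated])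
      have "(x * c j - b j) + b j \<in> ideal_pow m (Suc i)"
        by (rule ideal_add_closed[OF ideal_pow_ideal[OF m] d]) (use b j in simp)
      then have "x * c j \<in> ideal_pow m (Suc i)" by simp
      then show ?thesis by (rule colA)
    qed
    show "v \<in> mpow_mod scale m i"
      unfolding c
    proof (rule mpow_sum)
      fix j assume "j \<in> {..<n}"
      then have "c j \<in> ideal_pow m i" using cj by simp
      then show "c j *s g j \<in> mpow_mod scale m i" unfolding mpow_mod_def by (rule ss_1) simp
    qed
  qed
qed

lemma s1:
  assumes m: "is_ideal m" and xm: "x \<in> m"
  and P1: "\<forall>i<l. mod_colon scale (mpow_mod scale m (Suc i)) x = mpow_mod scale m i"
  and hyp: "mpow_mod scale m l \<subseteq> range (scale x)"
  shows "l - 1 \<le> j \<Longrightarrow> mpow_mod scale m (Suc j) \<subseteq> {x *s w | w. w \<in> mpow_mod scale m j}"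
proof (induction j rule: dec_induct)
  case base
  show ?case
  proof
    fix v assume v: "v \<in> mpow_mod scale m (Suc (l - 1))"
    show "v \<in> {x *s w | w. w \<in> mpow_mod scale m (l - 1)}"
    proof (cases "l = 0")
      case True
      have "v \<in> mpow_mod scale m l" using True mpow_0_UNIV by simp
      then obtain w where "v = x *s w" using hyp by blast
      then show ?thesis using True mpow_0_UNIV by auto
    next
      case False
      then have "Suc (l - 1) = l" by simp
      then have "v \<in> mpow_mod scale m l" using v by simp
      then obtain w where w: "v = x *s w" using hyp by blast
      have "w \<in> mod_colon scale (mpow_mod scale m (Suc (l - 1))) x"
        unfolding mod_colon_def using \<open>Suc (l - 1) = l\<close> w \<open>v \<in> mpow_mod scale m l\<close> by simp
      moreover have "mod_colon scale (mpow_mod scale m (Suc (l - 1))) x = mpow_mod scale m (l - 1)"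
        by (rule P1[rule_format]) (use False in simp)
      ultimately have "w \<in> mpow_mod scale m (l - 1)" by simp
      then show ?thesis using w by blast
    qed
  qed
next
  case (step j)
  show ?case
  proof
    fix v assume "v \<in> mpow_mod scale m (Suc (Suc j))"
    then have "v \<in> set_smult scale m (mpow_mod scale m (Suc j))" by (rule mpow_Suc_sub[OF m])
    then show "v \<in> {x *s w | w. w \<in> mpow_mod scale m (Suc j)}"
    proof (induction rule: ss_induct)
      case zero
      have "0 = x *s 0" by simp
      then show ?case using mpow_0 by blast
    next
      case (one a w)
      from one(2) step(3) obtain w' where w': "w = x *s w'" "w' \<in> mpow_mod scale m j" by blast
      have "a \<in> ideal_pow m 1" using ideal_pow_1[OF m] one(1) by simp
      then have "a *s w' \<in> mpow_mod scale m (1 + j)" by (rule mpow_scale[OF m _ w'(2)])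
      moreover have "a *s w = x *s (a *s w')" unfolding w'(1) by (rule scale_left_commute)
      ultimately show ?case by (intro CollectI exI[of _ "a *s w'"] conjI) simp_all
    next
      case (add p q)
      from add(1) obtain w1 where w1: "p = x *s w1" "w1 \<in> mpow_mod scale m (Suc j)" by blast
      from add(2) obtain w2 where w2: "q = x *s w2" "w2 \<in> mpow_mod scale m (Suc j)" by blast
      have "p + q = x *s (w1 + w2)" unfolding w1(1) w2(1) by (simp add: scale_right_distrib)
      moreover have "w1 + w2 \<in> mpow_mod scale m (Suc j)" by (rule mpow_add[OF w1(2) w2(2)])
      ultimately show ?case by blast
    qed
  qed
qed

end


declare ideal_pow.simps(2)[simp del]

context module
begin

lemma xreg:
  assumes noeth: "noetherian_ring TYPE('a)" and m: "is_ideal m"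
  and gen: "\<forall>v. \<exists>c. v = (\<Sum>i<(n::nat). c i *s g i)"
  and ym: "y \<in> m" and yreg: "\<forall>v. y *s v = 0 \<longrightarrow> v = 0"
  and S1: "\<And>j. j0 \<le> j \<Longrightarrow> mpow_mod scale m (Suc j) \<subseteq> {x *s w | w. w \<in> mpow_mod scale m j}"
  and z: "x *s z = 0"
  shows "z = 0"
proof -
  define S where "S j = {c. (\<forall>i\<ge>n. c i = 0) \<and> (x ^ j) *s (\<Sum>i<n. c i *s g i) = 0}" for j
  have ch: "S j \<subseteq> S (Suc j)" for j
  proof
    fix c assume "c \<in> S j"
    then have c1: "\<forall>i\<ge>n. c i = 0" and c2: "(x ^ j) *s (\<Sum>i<n. c i *s g i) = 0" unfolding S_def by auto
    have "(x ^ Suc j) *s (\<Sum>i<n. c i *s g i) = x *s ((x ^ j) *s (\<Sum>i<n. c i *s g i))" by simp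
    also have "\<dots> = 0" using c2 by simp
    finally show "c \<in> S (Suc j)" unfolding S_def using c1 by simp
  qed
  have sm: "submod (S j)" for j
    unfolding submod_def
  proof (intro conjI ballI allI)
    show "(\<lambda>_. 0) \<in> S j" unfolding S_def by simp
  next
    fix c d assume "c \<in> S j" "d \<in> S j"
    then have c1: "\<forall>i\<ge>n. c i = 0" and c2: "(x ^ j) *s (\<Sum>i<n. c i *s g i) = 0"
      and d1: "\<forall>i\<ge>n. d i = 0" and d2: "(x ^ j) *s (\<Sum>i<n. d i *s g i) = 0" unfolding S_def by auto
    have "(\<Sum>i<n. (c i + d i) *s g i) = (\<Sum>i<n. c i *s g i) + (\<Sum>i<n. d i *s g i)"
      by (simp add: scale_left_distrib sum.distrib)
    then have "(x ^ j) *s (\<Sum>i<n. (c i + d i) *s g i) = 0" using c2 d2 by (simp add: scale_right_distrib)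
    then show "(\<lambda>i. c i + d i) \<in> S j" unfolding S_def using c1 d1 by simp
  next
    fix r c assume "c \<in> S j"
    then have c1: "\<forall>i\<ge>n. c i = 0" and c2: "(x ^ j) *s (\<Sum>i<n. c i *s g i) = 0" unfolding S_def by auto
    have e1: "(\<Sum>i<n. (r * c i) *s g i) = r *s (\<Sum>i<n. c i *s g i)"
      unfolding scale_sum_right scale_scale ..
    have "(x ^ j) *s (\<Sum>i<n. (r * c i) *s g i) = r *s ((x ^ j) *s (\<Sum>i<n. c i *s g i))"
      unfolding e1 by (rule scale_left_commute)
    also have "\<dots> = 0" unfolding c2 by (rule scale_zero_right)
    finally have e2: "(x ^ j) *s (\<Sum>i<n. (r * c i) *s g i) = 0" .
    have e3: "\<forall>i\<ge>n. r * c i = 0" using c1 by simp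
    show "(\<lambda>i. r * c i) \<in> S j" unfolding S_def using e2 e3 by (intro CollectI conjI)
  qed
  have "\<exists>J. \<forall>j\<ge>J. S j = S J"
    by (rule acc_vec[OF noeth, of S n], rule ch, rule sm, simp add: S_def)
  then obtain s where s0: "\<forall>j\<ge>s. S j = S s" by (rule exE)
  have s: "S (Suc s) = S s" by (rule s0[rule_format]) simp
  have key: "(x ^ s) *s w = 0" if "(x ^ Suc s) *s w = 0" for w
  proof -
    obtain c where c: "w = (\<Sum>i<n. c i *s g i)" using gen by (rule allE) (erule exE)
    define c' where "c' i = (if i < n then c i else 0)" for i
    have w': "w = (\<Sum>i<n. c' i *s g i)" unfolding c c'_def by simp
    have "c' \<in> S (Suc s)" unfolding S_def using that w' by (simp add: c'_def)
    then have "c' \<in> S s" using s by simp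
    then show ?thesis unfolding S_def using w' by simp
  qed
  have Mx: "mpow_mod scale m (j0 + t) \<subseteq> {(x ^ t) *s w | w. True}" for t
  proof (induction t)
    case 0 then show ?case by force
  next
    case (Suc t)
    show ?case
    proof
      fix v assume "v \<in> mpow_mod scale m (j0 + Suc t)"
      then have "v \<in> mpow_mod scale m (Suc (j0 + t))" by simp
      then obtain w where w: "v = x *s w" "w \<in> mpow_mod scale m (j0 + t)" using S1[of "j0 + t"] by auto
      then obtain w' where "w = (x ^ t) *s w'" using Suc.IH by auto
      then have "v = (x ^ Suc t) *s w'" using w by simp
      then show "v \<in> {(x ^ Suc t) *s w | w. True}" by blast
    qed
  qed
  have ypow: "(y ^ t) *s v \<in> mpow_mod scale m t" for t v
  proof (induction t)
    case 0 then show ?case using mpow_0_UNIV by simp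
  next
    case (Suc t)
    have "y \<in> ideal_pow m 1" using ideal_pow_1[OF m] ym by simp
    then have "y *s ((y ^ t) *s v) \<in> mpow_mod scale m (1 + t)" by (rule mpow_scale[OF m _ Suc.IH])
    then show ?case by (simp add: mult.commute)
  qed
  have yregp: "v = 0" if "(y ^ t) *s v = 0" for t v
    using that
  proof (induction t)
    case 0 then show ?case by simp
  next
    case (Suc t)
    have "y *s ((y ^ t) *s v) = 0" using Suc.prems by simp
    then have "(y ^ t) *s v = 0" using yreg by blast
    then show ?case by (rule Suc.IH)
  qed
  define p where "p = j0 + s"
  have "(y ^ p) *s z \<in> mpow_mod scale m (j0 + s)" unfolding p_def by (rule ypow)
  then obtain w where w: "(y ^ p) *s z = (x ^ s) *s w" using Mx[of s] by auto
  have "(x ^ Suc s) *s w = x *s ((x ^ s) *s w)" by simp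
  also have "\<dots> = x *s ((y ^ p) *s z)" using w by simp
  also have "\<dots> = (y ^ p) *s (x *s z)" by (rule scale_left_commute)
  also have "\<dots> = 0" using z by simp
  finally have "(x ^ s) *s w = 0" by (rule key)
  then have "(y ^ p) *s z = 0" using w by simp
  then show "z = 0" by (rule yregp)
qed

lemma part2:
  assumes m: "is_ideal m" and xm: "x \<in> m"
  and P1: "\<forall>i<l. mod_colon scale (mpow_mod scale m (Suc i)) x = mpow_mod scale m i"
  and S1: "\<And>j. l - 1 \<le> j \<Longrightarrow> mpow_mod scale m (Suc j) \<subseteq> {x *s w | w. w \<in> mpow_mod scale m j}"
  and xr: "\<And>z. x *s z = 0 \<Longrightarrow> z = 0"
  shows "assoc_graded_depth_pos scale m"
proof -
  have S2: "v \<in> mpow_mod scale m (Suc k)" if xv: "x *s v \<in> mpow_mod scale m (Suc (Suc k))" for v k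
  proof (cases "Suc k < l")
    case True
    have "v \<in> mod_colon scale (mpow_mod scale m (Suc (Suc k))) x" using xv by (simp add: mod_colon_def)
    also have "\<dots> = mpow_mod scale m (Suc k)" by (rule P1[rule_format, OF True])
    finally show ?thesis .
  next
    case False
    then have "l - 1 \<le> Suc k" by simp
    from S1[OF this] xv obtain w where w: "x *s v = x *s w" "w \<in> mpow_mod scale m (Suc k)" by blast
    have "x *s (v - w) = 0" using w(1) by (simp add: scale_right_diff_distrib)
    then have "v - w = 0" by (rule xr)
    then show ?thesis using w(2) by simp
  qed
  define u where "u n = (if n = 1 then x else (0::'a))" for n :: nat
  have z: "\<And>n. (0::'a) \<in> ideal_pow m n" using ideal_zero[OF ideal_pow_ideal[OF m]] .
  show ?thesis
    unfolding assoc_graded_depth_pos_def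
  proof (intro exI[of _ u] conjI allI impI)
    show "u n \<in> ideal_pow m n" for n
      using z ideal_pow_1[OF m] xm unfolding u_def by auto
    show "u 0 \<in> m" unfolding u_def using ideal_zero[OF m] by simp
    show "\<exists>N. \<forall>n\<ge>N. u n \<in> ideal_pow m (Suc n)"
      by (rule exI[of _ 2]) (simp add: u_def z)
  next
    fix f :: "nat \<Rightarrow> 'b" and n
    assume H: "(\<forall>n. f n \<in> mpow_mod scale m n) \<and> (\<exists>N. \<forall>n\<ge>N. f n \<in> mpow_mod scale m (Suc n)) \<and>
        (\<forall>n. (\<Sum>i\<le>n. u i *s f (n - i)) \<in> mpow_mod scale m (Suc n))"
    have "(\<Sum>i\<le>Suc n. u i *s f (Suc n - i)) = (\<Sum>i\<le>Suc n. if i = 1 then x *s f (Suc n - i) else 0)"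
      by (rule sum.cong) (simp_all add: u_def)
    also have "\<dots> = x *s f n" by (subst sum.delta) simp_all
    finally have "x *s f n \<in> mpow_mod scale m (Suc (Suc n))" using H by metis
    then show "f n \<in> mpow_mod scale m (Suc n)" by (rule S2)
  qed
qed

end


declare ideal_pow.simps(2)[simp del]

lemma ideal_gen_empty: "ideal_gen {} \<subseteq> {0}"
proof
  fix w assume "w \<in> ideal_gen ({}::'a::comm_ring_1 set)"
  then have "w \<in> set_smult (*) UNIV ({}::'a set)" unfolding ideal_gen_def .
  then show "w \<in> {0}"
  proof (induction rule: ss_induct)
    case zero then show ?case by simp
  next
    case (one a v) then show ?case by simp
  next
    case (add p q) then show ?case by simp
  qed
qed

lemma (in module) ss_zero_ideal: assumes "X \<subseteq> {0}" shows "set_smult scale X UNIV \<subseteq> {0}"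
proof
  fix w assume "w \<in> set_smult scale X UNIV"
  then show "w \<in> {0}"
  proof (induction rule: ss_induct)
    case zero then show ?case by simp
  next
    case (one a v) then show ?case using assms by auto
  next
    case (add p q) then show ?case by simp
  qed
qed

lemma depth_one_reg:
  assumes md: "module scale" and dep: "depth scale m = 1"
  shows "\<exists>y. y \<in> m \<and> (\<forall>v. scale y v = 0 \<longrightarrow> v = 0)"
proof -
  define D where "D = {enat n | n. \<exists>xs. regular_seq scale m xs n}"
  have SD: "Sup D = 1" using dep unfolding depth_def D_def .
  have "\<exists>xs. regular_seq scale m xs 1"
  proof (rule ccontr)
    assume no: "\<not> (\<exists>xs. regular_seq scale m xs 1)"
    have "Sup D \<le> 0"
    proof (rule Sup_least)
      fix e assume "e \<in> D"
      then obtain k xs where e: "e = enat k" and r: "regular_seq scale m xs k" unfolding D_def by blast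
      have "e \<le> Sup D" using \<open>e \<in> D\<close> by (rule Sup_upper)
      then have "k \<le> 1" using SD e by (simp add: one_enat_def)
      moreover have "k \<noteq> 1" using no r by blast
      ultimately have "k = 0" by simp
      then show "e \<le> 0" using e by (simp add: zero_enat_def)
    qed
    then show False using SD by simp
  qed
  then obtain xs where r: "regular_seq scale m xs 1" by blast
  have ym: "xs 0 \<in> m" using r unfolding regular_seq_def by simp
  have reg: "\<forall>v. scale (xs 0) v \<in> set_smult scale (ideal_gen (xs ` {..<0})) UNIV
                 \<longrightarrow> v \<in> set_smult scale (ideal_gen (xs ` {..<0})) UNIV"
    using r unfolding regular_seq_def by simp
  have Z: "set_smult scale (ideal_gen (xs ` {..<0})) UNIV \<subseteq> {0}"
    by (rule module.ss_zero_ideal[OF md]) (use ideal_gen_empty in simp)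
  have "\<forall>v. scale (xs 0) v = 0 \<longrightarrow> v = 0"
  proof (intro allI impI)
    fix v assume "scale (xs 0) v = 0"
    then have "scale (xs 0) v \<in> set_smult scale (ideal_gen (xs ` {..<0})) UNIV" using ss_0 by simp
    then have "v \<in> set_smult scale (ideal_gen (xs ` {..<0})) UNIV" using reg by blast
    then show "v = 0" using Z by blast
  qed
  then show ?thesis using ym by blast
qed

theorem lemma4p5:
  fixes m :: "'a::comm_ring_1 set"
    and scale :: "'a \<Rightarrow> 'b \<Rightarrow> 'b::ab_group_add"
    and x :: 'a and l :: nat
  assumes local: "noetherian_local m"
    and resfield: "infinite_residue_field m"
    and dimA: "krull_dim ({0} :: 'a set) > 0"
    and CM_A: "cohen_macaulay ((*) :: 'a \<Rightarrow> 'a \<Rightarrow> 'a) m"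
    and modM: "module scale"
    and CM_M: "cohen_macaulay scale m"
    and dimM: "module_dim scale = 1"
    and pres: "has_presentation_in_pow scale m l"
    and GA: "assoc_graded_depth_pos ((*) :: 'a \<Rightarrow> 'a \<Rightarrow> 'a) m"
    and sup: "superficial (sum_scale scale) m x"
  shows "(\<forall>i<l. mod_colon scale (mpow_mod scale m (Suc i)) x = mpow_mod scale m i)
       \<and> (mpow_mod scale m l \<subseteq> range (scale x) \<longrightarrow> assoc_graded_depth_pos scale m)"
proof -
  have mi: "is_ideal m" using local unfolding noetherian_local_def maximal_ideal_def by simp
  have noeth: "noetherian_ring TYPE('a)" using local unfolding noetherian_local_def by simp
  have xm: "x \<in> m" using sup unfolding superficial_def by simp
  obtain c where cc0: "\<forall>n>c. mod_colon (sum_scale scale) (mpow_mod (sum_scale scale) m n) x \<inter>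
      mpow_mod (sum_scale scale) m c = mpow_mod (sum_scale scale) m (n - 1)"
    using sup unfolding superficial_def by blast
  have MS: "\<And>n. mpow_mod (sum_scale scale) m n = ideal_pow m n \<times> mpow_mod scale m n"
    by (rule mpow_sum_scale[OF modM mi])
  have M0: "\<And>n. 0 \<in> mpow_mod scale m n" by (rule module.mpow_0[OF modM])
  have ccA: "\<forall>n>c. {a. x * a \<in> ideal_pow m n} \<inter> ideal_pow m c = ideal_pow m (n - 1)"
  proof (intro allI impI)
    fix n assume "n > c"
    then have E: "mod_colon (sum_scale scale) (ideal_pow m n \<times> mpow_mod scale m n) x \<inter>
       (ideal_pow m c \<times> mpow_mod scale m c) = ideal_pow m (n - 1) \<times> mpow_mod scale m (n - 1)"
      using cc0 unfolding MS by simp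
    show "{a. x * a \<in> ideal_pow m n} \<inter> ideal_pow m c = ideal_pow m (n - 1)"
    proof (rule set_eqI)
      fix a
      have "a \<in> {a. x * a \<in> ideal_pow m n} \<inter> ideal_pow m c \<longleftrightarrow>
        (a, 0) \<in> mod_colon (sum_scale scale) (ideal_pow m n \<times> mpow_mod scale m n) x \<inter>
       (ideal_pow m c \<times> mpow_mod scale m c)"
        by (simp add: mod_colon_def sum_scale_def module.scale_zero_right[OF modM] M0)
      also have "\<dots> \<longleftrightarrow> (a, 0) \<in> ideal_pow m (n - 1) \<times> mpow_mod scale m (n - 1)" unfolding E ..
      also have "\<dots> \<longleftrightarrow> a \<in> ideal_pow m (n - 1)" using M0 by simp
      finally show "a \<in> {a. x * a \<in> ideal_pow m n} \<inter> ideal_pow m c \<longleftrightarrow> a \<in> ideal_pow m (n - 1)" .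
    qed
  qed
  obtain u where u_mem: "\<forall>n. u n \<in> ideal_pow m n" and u0: "u 0 \<in> m"
    and uN: "\<exists>N. \<forall>n\<ge>N. u n \<in> ideal_pow m (Suc n)"
    and nzGA: "\<forall>f. (\<forall>n. f n \<in> mpow_mod (*) m n) \<and> (\<exists>N. \<forall>n\<ge>N. f n \<in> mpow_mod (*) m (Suc n)) \<and>
        (\<forall>n. (\<Sum>i\<le>n. u i * f (n - i)) \<in> mpow_mod (*) m (Suc n))
        \<longrightarrow> (\<forall>n. f n \<in> mpow_mod (*) m (Suc n))"
    using GA unfolding assoc_graded_depth_pos_def by blast
  obtain Nu where uN': "\<forall>n\<ge>Nu. u n \<in> ideal_pow m (Suc n)" using uN by blast
  have nz: "\<forall>f. (\<forall>n. f n \<in> ideal_pow m n) \<and> (\<exists>N. \<forall>n\<ge>N. f n \<in> ideal_pow m (Suc n)) \<and>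
        (\<forall>n. (\<Sum>i\<le>n. u i * f (n - i)) \<in> ideal_pow m (Suc n))
        \<longrightarrow> (\<forall>n. f n \<in> ideal_pow m (Suc n))"
    using nzGA unfolding mpow_mod_ring[OF mi] .
  have colA: "\<And>n a. x * a \<in> ideal_pow m (Suc n) \<Longrightarrow> a \<in> ideal_pow m n"
    by (rule colon_A[OF mi u_mem u0 uN' nz ccA])
  have P1: "\<forall>i<l. mod_colon scale (mpow_mod scale m (Suc i)) x = mpow_mod scale m i"
    using module.part1[OF modM mi xm colA pres] by blast
  show ?thesis
  proof (intro conjI impI)
    show "\<forall>i<l. mod_colon scale (mpow_mod scale m (Suc i)) x = mpow_mod scale m i" by (rule P1)
    assume hyp: "mpow_mod scale m l \<subseteq> range (scale x)"
    have S1: "\<And>j. l - 1 \<le> j \<Longrightarrow> mpow_mod scale m (Suc j) \<subseteq> {scale x w | w. w \<in> mpow_mod scale m j}"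
      by (rule module.s1[OF modM mi xm P1 hyp])
    have dep: "depth scale m = 1" using CM_M dimM unfolding cohen_macaulay_def by simp
    obtain y where ym: "y \<in> m" and yreg: "\<forall>v. scale y v = 0 \<longrightarrow> v = 0"
      using depth_one_reg[OF modM dep] by blast
    from pres obtain n :: nat and g where gen: "\<forall>v. \<exists>c. v = (\<Sum>i<n. scale (c i) (g i))"
      unfolding has_presentation_in_pow_def by blast
    have xr: "\<And>z. scale x z = 0 \<Longrightarrow> z = 0"
      by (rule module.xreg[OF modM noeth mi gen ym yreg S1])
    show "assoc_graded_depth_pos scale m"
      by (rule module.part2[OF modM mi xm P1 S1 xr])
  qed
qed


end
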